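(* Let $\mathcal P$ be a Poisson $n$-Lie algebra over an arbitrary field $\mathbb F$. For any $a\in\mathcal P$ and $\lambda\in\mathbb F$, the generalized eigenspace $$P_{a,\lambda}=\{x\in\mathcal P\mid (P_a-\lambda)^k(x)=0\text{ for some }k\in\mathbb N\}$$ is an ideal of $\mathcal P$, where $P_a(z)=a\cdot z$.
   Context: A Poisson $n$-Lie algebra is a commutative associative algebra $(\mathcal P,\cdot)$ with an $n$-linear skew-symmetric bracket satisfying the fundamental identity $[x_1,\dots,x_{n-1},[y_1,\dots,y_n]]=\sum_{i=1}^n[y_1,\dots,[x_1,\dots,x_{n-1},y_i],\dots,y_n]$ and the Leibniz rule $[y\cdot z,x_2,\dots,x_n]=y\cdot[z,x_2,\dots,x_n]+z\cdot[y,x_2,\dots,x_n]$. An ideal is a subspace $\mathcal I$ with $\mathcal P\cdot\mathcal I\subseteq\mathcal I$ and $[\mathcal I,\mathcal P,\dots,\mathcal P]\subseteq\mathcal I$ (linear spans). *)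

theory Defs
  imports Main "HOL.Vector_Spaces"
begin

text \<open>A Poisson n-Lie algebra over a field 'k: the underlying vector space is the type 'v
  with scalar multiplication sc; mul is the commutative associative (bilinear)
  multiplication; br is the n-ary bracket, applied to lists of length n.\<close>

definition poisson_nlie ::
  "('k::field \<Rightarrow> 'v::ab_group_add \<Rightarrow> 'v) \<Rightarrow> nat \<Rightarrow> ('v \<Rightarrow> 'v \<Rightarrow> 'v) \<Rightarrow> ('v list \<Rightarrow> 'v) \<Rightarrow> bool"
where
  "poisson_nlie sc n mul br \<longleftrightarrow>
     n \<ge> 2 \<and> vector_space sc \<and>
     \<comment> \<open>commutative associative algebra (bilinear product)\<close>
     (\<forall>x. Vector_Spaces.linear sc sc (mul x)) \<and>
     (\<forall>x y. mul x y = mul y x) \<and>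
     (\<forall>x y z. mul (mul x y) z = mul x (mul y z)) \<and>
     \<comment> \<open>n-linearity of the bracket\<close>
     (\<forall>xs i. length xs = n \<and> i < n \<longrightarrow> Vector_Spaces.linear sc sc (\<lambda>v. br (xs[i := v]))) \<and>
     \<comment> \<open>skew-symmetry\<close>
     (\<forall>xs i j. length xs = n \<and> i < n \<and> j < n \<and> i \<noteq> j \<longrightarrow>
        br (xs[i := xs ! j, j := xs ! i]) = - br xs) \<and>
     \<comment> \<open>fundamental identity\<close>
     (\<forall>xs ys. length xs = n - 1 \<and> length ys = n \<longrightarrow>
        br (xs @ [br ys]) = (\<Sum>i<n. br (ys[i := br (xs @ [ys ! i])]))) \<and>
     \<comment> \<open>Leibniz rule\<close>
     (\<forall>y z xs. length xs = n - 1 \<longrightarrow>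
        br (mul y z # xs) = mul y (br (z # xs)) + mul z (br (y # xs)))"

definition pn_ideal ::
  "('k::field \<Rightarrow> 'v::ab_group_add \<Rightarrow> 'v) \<Rightarrow> nat \<Rightarrow> ('v \<Rightarrow> 'v \<Rightarrow> 'v) \<Rightarrow> ('v list \<Rightarrow> 'v) \<Rightarrow> 'v set \<Rightarrow> bool"
where
  "pn_ideal sc n mul br I \<longleftrightarrow>
     module.subspace sc I \<and>
     (\<forall>x\<in>I. \<forall>y. mul y x \<in> I) \<and>
     (\<forall>x\<in>I. \<forall>ys. length ys = n - 1 \<longrightarrow> br (x # ys) \<in> I)"

definition gen_eigenspace ::
  "('k::field \<Rightarrow> 'v::ab_group_add \<Rightarrow> 'v) \<Rightarrow> ('v \<Rightarrow> 'v \<Rightarrow> 'v) \<Rightarrow> 'v \<Rightarrow> 'k \<Rightarrow> 'v set"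
where
  "gen_eigenspace sc mul a l = {x. \<exists>k::nat. ((\<lambda>z. mul a z - sc l z) ^^ k) x = 0}"

end

theory Submission
  imports Defs
begin

lemma funpow_linear:
  assumes "Vector_Spaces.linear sc sc (f::'v::ab_group_add \<Rightarrow> 'v)" "vector_space (sc::'k::field \<Rightarrow> _)"
  shows "Vector_Spaces.linear sc sc (f ^^ k)"
proof (induction k)
  case 0
  have "Vector_Spaces.linear sc sc (\<lambda>x::'v. x)"
    using assms(2) by (simp add: linear_iff)
  then show ?case by (simp add: id_def)
next
  case (Suc k)
  then have "Vector_Spaces.linear sc sc (f \<circ> f^^k)"
    using assms(1) Vector_Spaces.linear_compose[of sc sc "f^^k" sc f] by blast
  then show ?case by (metis funpow.simps(2))
qed

theorem proposition5p21:
  fixes sc :: "'k::field \<Rightarrow> 'v::ab_group_add \<Rightarrow> 'v"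
    and mul :: "'v \<Rightarrow> 'v \<Rightarrow> 'v" and br :: "'v list \<Rightarrow> 'v"
    and n :: nat and a :: 'v and l :: 'k
  assumes "poisson_nlie sc n mul br"
  shows "pn_ideal sc n mul br (gen_eigenspace sc mul a l)"
proof -
  note P = assms[unfolded poisson_nlie_def]
  have vs: "vector_space sc" using P by blast
  have lm: "\<And>x. Vector_Spaces.linear sc sc (mul x)" using P by blast
  have comm: "\<And>x y. mul x y = mul y x" using P by blast
  have assoc: "\<And>x y z. mul (mul x y) z = mul x (mul y z)" using P by blast
  have md: "module sc" using vs by (simp add: vector_space_def module_def)
  define T where "T = (\<lambda>z. mul a z - sc l z)"
  have madd: "\<And>x u v. mul x (u + v) = mul x u + mul x v"
    using lm by (simp add: linear_iff)
  have msc: "\<And>x c u. mul x (sc c u) = sc c (mul x u)"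
    using lm by (simp add: linear_iff)
  have Tlin: "Vector_Spaces.linear sc sc T"
    unfolding linear_iff T_def using vs madd msc
    by (simp add: module.scale_right_distrib[OF md] module.scale_scale[OF md]
        module.scale_right_diff_distrib[OF md] mult.commute algebra_simps)
  have Tk: "\<And>k. Vector_Spaces.linear sc sc (T ^^ k)"
    using funpow_linear[OF Tlin vs] .
  have mdiff: "\<And>x u v. mul x (u - v) = mul x u - mul x v"
    using lm by (metis linear_iff_module_hom module_hom.diff)
  have Tmul: "\<And>y x. T (mul y x) = mul y (T x)"
  proof -
    fix y x
    have "mul a (mul y x) = mul (mul a y) x" by (simp add: assoc)
    also have "\<dots> = mul (mul y a) x" by (simp add: comm[of a y])
    also have "\<dots> = mul y (mul a x)" by (simp add: assoc)
    finally have "mul a (mul y x) = mul y (mul a x)" .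
    moreover have "sc l (mul y x) = mul y (sc l x)" using msc by simp
    ultimately show "T (mul y x) = mul y (T x)" unfolding T_def by (simp add: mdiff)
  qed
  have m0: "\<And>y. mul y 0 = 0" using lm by (metis linear_iff_module_hom module_hom.zero)
  have Tkmul: "\<And>k y x. (T^^k) (mul y x) = mul y ((T^^k) x)"
  proof -
    fix k y x show "(T^^k) (mul y x) = mul y ((T^^k) x)"
      by (induction k) (simp_all add: Tmul)
  qed
  have Tk0: "\<And>k. (T^^k) 0 = 0"
    using Tk by (metis linear_iff_module_hom module_hom.zero)
  have Tkadd: "\<And>k u v. (T^^k) (u + v) = (T^^k) u + (T^^k) v"
    using Tk by (simp add: linear_iff)
  have Tksc: "\<And>k c u. (T^^k) (sc c u) = sc c ((T^^k) u)"
    using Tk by (simp add: linear_iff)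
  have Tkdiff: "\<And>k u v. (T^^k) (u - v) = (T^^k) u - (T^^k) v"
    using Tk by (metis linear_iff_module_hom module_hom.diff)
  have E: "gen_eigenspace sc mul a l = {x. \<exists>k. (T^^k) x = 0}"
    unfolding gen_eigenspace_def T_def by simp
  have sc0: "\<And>c. sc c 0 = 0" using vs by (simp add: module.scale_zero_right[OF md])
  have sub: "module.subspace sc {x. \<exists>k. (T^^k) x = 0}"
  proof -
    have "module sc" using md .
    moreover have "0 \<in> {x. \<exists>k. (T^^k) x = 0}" by (auto intro: exI[of _ 0])
    moreover have "\<forall>x\<in>{x. \<exists>k. (T^^k) x = 0}. \<forall>y\<in>{x. \<exists>k. (T^^k) x = 0}. x + y \<in> {x. \<exists>k. (T^^k) x = 0}"
    proof (intro ballI)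
      fix x y assume "x \<in> {x. \<exists>k. (T^^k) x = 0}" "y \<in> {x. \<exists>k. (T^^k) x = 0}"
      then obtain i j where i: "(T^^i) x = 0" and j: "(T^^j) y = 0" by auto
      have "(T^^(j+i)) x = 0" using i Tk0 by (simp add: funpow_add)
      moreover have "(T^^(i+j)) y = 0" using j Tk0 by (simp add: funpow_add)
      ultimately have "(T^^(i+j)) (x+y) = 0" using Tkadd by (simp add: add.commute)
      then show "x + y \<in> {x. \<exists>k. (T^^k) x = 0}" by blast
    qed
    moreover have "\<forall>c. \<forall>x\<in>{x. \<exists>k. (T^^k) x = 0}. sc c x \<in> {x. \<exists>k. (T^^k) x = 0}"
    proof (intro allI ballI)
      fix c x assume "x \<in> {x. \<exists>k. (T^^k) x = 0}"
      then obtain k where "(T^^k) x = 0" by auto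
      then have "(T^^k) (sc c x) = 0" using Tksc sc0 by simp
      then show "sc c x \<in> {x. \<exists>k. (T^^k) x = 0}" by blast
    qed
    ultimately show ?thesis by (simp add: module.subspace_def)
  qed
  have n2: "n \<ge> 2" using P by blast
  have nlin: "\<forall>xs i. length xs = n \<and> i < n \<longrightarrow> Vector_Spaces.linear sc sc (\<lambda>v. br (xs[i := v]))"
    using P by blast
  have brlin: "\<And>ys. length ys = n - 1 \<Longrightarrow> Vector_Spaces.linear sc sc (\<lambda>v. br (v # ys))"
  proof -
    fix ys :: "'v list" assume h: "length ys = n - 1"
    have "length (0 # ys) = n" using h n2 by simp
    then have "Vector_Spaces.linear sc sc (\<lambda>v. br ((0 # ys)[0 := v]))"
    proof -
      have "0 < n" using n2 by simp
      then show ?thesis using nlin[rule_format, of "0 # ys" 0] \<open>length (0 # ys) = n\<close> by blast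
    qed
    then show "Vector_Spaces.linear sc sc (\<lambda>v. br (v # ys))" by simp
  qed
  have leib: "\<And>y z ys. length ys = n - 1 \<Longrightarrow> br (mul y z # ys) = mul y (br (z # ys)) + mul z (br (y # ys))"
    using P by blast
  have brk: "(T^^(Suc m)) (br (z # ys)) = 0" if "(T^^m) z = 0" "length ys = n - 1" for m z ys
    using that(1)
  proof (induction m arbitrary: z)
    case 0
    then have "z = 0" by simp
    then have "br (z # ys) = 0"
      using module_hom.zero[OF module_hom_iff_linear[THEN iffD2, OF brlin[OF that(2)]]] by simp
    then show ?case using Tk0[of 1] by simp
  next
    case (Suc m)
    define b where "b = br (a # ys)"
    have bd: "Vector_Spaces.linear sc sc (\<lambda>v. br (v # ys))" using brlin[OF that(2)] .
    have "T (br (z # ys)) = br (T z # ys) - mul b z"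
    proof -
      have "br (T z # ys) = br (mul a z # ys) - br (sc l z # ys)"
        unfolding T_def using module_hom.diff[OF module_hom_iff_linear[THEN iffD2, OF bd]] by simp
      also have "\<dots> = mul a (br (z # ys)) + mul z b - sc l (br (z # ys))"
        using leib[OF that(2)] bd by (simp add: linear_iff b_def)
      finally show ?thesis unfolding T_def using comm by (simp add: algebra_simps)
    qed
    note eq = this
    have s1: "(T^^(Suc (Suc m))) (br (z # ys)) = (T^^(Suc m)) (T (br (z # ys)))"
      by (simp only: funpow_Suc_right comp_apply)
    have s2: "(T^^(Suc m)) (T (br (z # ys))) = (T^^(Suc m)) (br (T z # ys)) - (T^^(Suc m)) (mul b z)"
      by (simp only: eq Tkdiff)
    have pm: "(T^^m) (T z) = 0" using Suc.prems by (simp only: funpow_Suc_right comp_apply)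
    have s3: "(T^^(Suc m)) (br (T z # ys)) = 0"
      using Suc.IH[OF pm] .
    have s4: "(T^^(Suc m)) (mul b z) = 0" by (simp only: Tkmul Suc.prems m0)
    show ?case using s1 s2 s3 s4 by simp
  qed
  show ?thesis
    unfolding pn_ideal_def E
  proof (intro conjI sub ballI allI impI)
    fix x y assume "x \<in> {x. \<exists>k. (T^^k) x = 0}"
    then obtain k where "(T^^k) x = 0" by auto
    then have "(T^^k) (mul y x) = 0" using Tkmul m0 by simp
    then show "mul y x \<in> {x. \<exists>k. (T^^k) x = 0}" by blast
  next
    fix x ys assume "x \<in> {x. \<exists>k. (T^^k) x = 0}" "length (ys::'v list) = n - 1"
    then obtain k where "(T^^k) x = 0" by auto
    then have "(T^^(Suc k)) (br (x # ys)) = 0" using brk \<open>length ys = n - 1\<close> by blast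
    then show "br (x # ys) \<in> {x. \<exists>k. (T^^k) x = 0}" by blast
  qed
qed

end
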